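(* The homogeneous Finsler space $(G/H,F)$ is naturally reductive (with respect to $\mathfrak g=\mathfrak h+\mathfrak m$) if and only if $[u,A_u(u)]=0$ for every nonzero $u\in\mathfrak m$.
   Context: $G$ is a compact connected semisimple Lie group, $H$ a closed subgroup, $Q=-B$ with $B$ the Killing form of $\mathfrak g$, $\mathfrak m$ the $Q$-orthogonal complement of $\mathfrak h$, identified with $T_{eH}(G/H)$; for $X\in\mathfrak g$, $X_{\mathfrak m}$ is its $\mathfrak m$-component. A $G$-invariant Finsler metric $F$ corresponds to an $\mathrm{Ad}(H)$-invariant Minkowski norm on $\mathfrak m$ with fundamental tensor $g_y(u,v)=\frac12\frac{\partial^2}{\partial s\partial t}F^2(y+su+tv)|_{s=t=0}$. For $y\neq0$, the metric operator $A_y$ is defined by $g_y(u,v)=Q(A_y(u),v)$. $(G/H,F)$ is naturally reductive if $g_u(u,[u,v]_{\mathfrak m})=0$ for all nonzero $u\in\mathfrak m$ and all $v\in\mathfrak m$. *)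

theory Defs
  imports "HOL-Analysis.Analysis"
begin

text \<open>Lie-algebraic model of a homogeneous Finsler space G/H with G compact connected
semisimple.\<close>

definition lie_bracket :: "('g::euclidean_space \<Rightarrow> 'g \<Rightarrow> 'g) \<Rightarrow> bool" where
  "lie_bracket br \<longleftrightarrow> (\<forall>x. linear (br x)) \<and> (\<forall>y. linear (\<lambda>x. br x y))
     \<and> (\<forall>x. br x x = 0)
     \<and> (\<forall>x y z. br x (br y z) + br y (br z x) + br z (br x y) = 0)"

definition lin_trace :: "('g::euclidean_space \<Rightarrow> 'g) \<Rightarrow> real" where
  "lin_trace f = (\<Sum>b\<in>Basis. f b \<bullet> b)"

definition killing :: "('g::euclidean_space \<Rightarrow> 'g \<Rightarrow> 'g) \<Rightarrow> 'g \<Rightarrow> 'g \<Rightarrow> real" where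
  "killing br x y = lin_trace (\<lambda>z. br x (br y z))"

definition lin_exp :: "('g::euclidean_space \<Rightarrow> 'g) \<Rightarrow> 'g \<Rightarrow> 'g" where
  "lin_exp L = (\<lambda>x. \<Sum>k. (1 / fact k) *\<^sub>R (L ^^ k) x)"

text \<open>Ad(H) is a closed subgroup of Int(g) = {exp(ad X)} (the adjoint group of the compact
semisimple g), consisting of Lie algebra automorphisms.\<close>
definition closed_adjoint_subgroup :: "('g::euclidean_space \<Rightarrow> 'g \<Rightarrow> 'g) \<Rightarrow> ('g \<Rightarrow> 'g) set \<Rightarrow> bool" where
  "closed_adjoint_subgroup br AdH \<longleftrightarrow>
     id \<in> AdH
   \<and> (\<forall>k\<in>AdH. linear k \<and> bij k \<and> (\<forall>x y. k (br x y) = br (k x) (k y)))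
   \<and> (\<forall>k\<in>AdH. \<forall>l\<in>AdH. k \<circ> l \<in> AdH)
   \<and> (\<forall>k\<in>AdH. inv k \<in> AdH)
   \<and> (\<forall>k\<in>AdH. \<exists>X. k = lin_exp (br X))
   \<and> (\<forall>K k. (\<forall>n. K n \<in> AdH) \<longrightarrow> linear k \<longrightarrow> (\<forall>x. (\<lambda>n. K n x) \<longlonglongrightarrow> k x) \<longrightarrow> k \<in> AdH)"

text \<open>Lie algebra of Ad(H) (pulled back via ad): h = {X. exp(t ad X) \<in> Ad(H) for all t}.\<close>
definition lie_alg_of :: "('g::euclidean_space \<Rightarrow> 'g \<Rightarrow> 'g) \<Rightarrow> ('g \<Rightarrow> 'g) set \<Rightarrow> 'g set" where
  "lie_alg_of br AdH = {X. \<forall>t::real. lin_exp (\<lambda>y. t *\<^sub>R br X y) \<in> AdH}"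

definition Qform :: "('g::euclidean_space \<Rightarrow> 'g \<Rightarrow> 'g) \<Rightarrow> 'g \<Rightarrow> 'g \<Rightarrow> real" where
  "Qform br x y = - killing br x y"

definition mcompl :: "('g::euclidean_space \<Rightarrow> 'g \<Rightarrow> 'g) \<Rightarrow> 'g set \<Rightarrow> 'g set" where
  "mcompl br h = {v. \<forall>x\<in>h. Qform br x v = 0}"

definition mpart :: "('g::euclidean_space \<Rightarrow> 'g \<Rightarrow> 'g) \<Rightarrow> 'g set \<Rightarrow> 'g \<Rightarrow> 'g" where
  "mpart br h X = (THE w. w \<in> mcompl br h \<and> X - w \<in> h)"

fun higher_dirderivs :: "nat \<Rightarrow> ('g::euclidean_space \<Rightarrow> real) \<Rightarrow> ('g \<Rightarrow> real) set" where
  "higher_dirderivs 0 f = {f}"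
| "higher_dirderivs (Suc k) f =
     {(\<lambda>x. frechet_derivative g (at x) v) | g v. g \<in> higher_dirderivs k f}"

definition smooth_on :: "'g::euclidean_space set \<Rightarrow> ('g \<Rightarrow> real) \<Rightarrow> bool" where
  "smooth_on S f \<longleftrightarrow> (\<forall>k. \<forall>g\<in>higher_dirderivs k f. g differentiable_on S)"

definition fund_tensor :: "('g::euclidean_space \<Rightarrow> real) \<Rightarrow> 'g \<Rightarrow> 'g \<Rightarrow> 'g \<Rightarrow> real" where
  "fund_tensor F y u v =
     (1/2) * deriv (\<lambda>s. deriv (\<lambda>t. (F (y + s *\<^sub>R u + t *\<^sub>R v))\<^sup>2) 0) 0"

text \<open>Minkowski norm on the subspace m (F only matters on m).\<close>
definition minkowski_norm_on :: "'g::euclidean_space set \<Rightarrow> ('g \<Rightarrow> real) \<Rightarrow> bool" where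
  "minkowski_norm_on m F \<longleftrightarrow>
     (\<forall>y\<in>m. F y \<ge> 0) \<and> (\<forall>y\<in>m. y \<noteq> 0 \<longrightarrow> F y > 0)
   \<and> (\<forall>y\<in>m. \<forall>c>0. F (c *\<^sub>R y) = c * F y)
   \<and> (\<exists>S Fe. open S \<and> m - {0} \<subseteq> S \<and> smooth_on S Fe \<and> (\<forall>y\<in>m. Fe y = F y))
   \<and> (\<forall>y\<in>m - {0}. \<forall>u\<in>m - {0}. fund_tensor F y u u > 0)"

definition metric_op :: "('g::euclidean_space \<Rightarrow> 'g \<Rightarrow> 'g) \<Rightarrow> 'g set \<Rightarrow> ('g \<Rightarrow> real) \<Rightarrow> 'g \<Rightarrow> 'g \<Rightarrow> 'g" where
  "metric_op br m F y u = (THE w. w \<in> m \<and> (\<forall>v\<in>m. fund_tensor F y u v = Qform br w v))"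

definition naturally_reductive :: "('g::euclidean_space \<Rightarrow> 'g \<Rightarrow> 'g) \<Rightarrow> 'g set \<Rightarrow> ('g \<Rightarrow> real) \<Rightarrow> bool" where
  "naturally_reductive br h F \<longleftrightarrow>
     (\<forall>u\<in>mcompl br h - {0}. \<forall>v\<in>mcompl br h.
        fund_tensor F u u (mpart br h (br u v)) = 0)"

end

theory Submission imports Defs begin

typedef (overloaded) 'a endo = "UNIV :: ('a::euclidean_space \<Rightarrow>\<^sub>L 'a) set"
  morphisms bl_of endo_of_bl by auto

setup_lifting type_definition_endo

instantiation endo :: (euclidean_space) real_normed_algebra_1
begin
lift_definition zero_endo :: "'a endo" is 0 .
lift_definition one_endo :: "'a endo" is id_blinfun .
lift_definition plus_endo :: "'a endo \<Rightarrow> 'a endo \<Rightarrow> 'a endo" is "(+)" .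
lift_definition minus_endo :: "'a endo \<Rightarrow> 'a endo \<Rightarrow> 'a endo" is "(-)" .
lift_definition uminus_endo :: "'a endo \<Rightarrow> 'a endo" is "uminus" .
lift_definition times_endo :: "'a endo \<Rightarrow> 'a endo \<Rightarrow> 'a endo" is "(o\<^sub>L)" .
lift_definition scaleR_endo :: "real \<Rightarrow> 'a endo \<Rightarrow> 'a endo" is "scaleR" .
lift_definition norm_endo :: "'a endo \<Rightarrow> real" is norm .
lift_definition dist_endo :: "'a endo \<Rightarrow> 'a endo \<Rightarrow> real" is dist .
definition sgn_endo :: "'a endo \<Rightarrow> 'a endo" where "sgn_endo x = scaleR (inverse (norm x)) x"
definition uniformity_endo :: "('a endo \<times> 'a endo) filter" where
  "uniformity_endo = (INF e\<in>{0<..}. principal {(x, y). dist x y < e})"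
definition open_endo :: "'a endo set \<Rightarrow> bool" where
  "open_endo U = (\<forall>x\<in>U. \<forall>\<^sub>F (x', y) in uniformity. x' = x \<longrightarrow> y \<in> U)"
instance
  apply intro_classes
  apply (simp_all only: uniformity_endo_def open_endo_def sgn_endo_def)
  apply (transfer; simp add: algebra_simps dist_norm norm_triangle_ineq norm_blinfun_compose blinfun_eqI; fail)+
  apply (transfer; rule blinfun_eqI; simp add: blinfun.bilinear_simps; fail)+
  subgoal by (metis norm_blinfun_id norm_zero zero_neq_one zero_endo.rep_eq one_endo.rep_eq)
  subgoal by (simp add: dist_endo.rep_eq norm_endo.rep_eq minus_endo.rep_eq dist_norm)
  subgoal for x by (metis norm_endo.rep_eq zero_endo.rep_eq bl_of_inject norm_eq_zero)
  subgoal by (simp add: norm_endo.rep_eq plus_endo.rep_eq norm_triangle_ineq)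
  subgoal by (simp add: norm_endo.rep_eq scaleR_endo.rep_eq)
  subgoal by (simp add: norm_endo.rep_eq times_endo.rep_eq norm_blinfun_compose)
  subgoal by (simp add: norm_endo.rep_eq one_endo.rep_eq)
  done
end

instance endo :: (euclidean_space) banach
proof
  fix X :: "nat \<Rightarrow> 'a endo"
  assume "Cauchy X"
  then have "Cauchy (\<lambda>n. bl_of (X n))"
    by (simp add: Cauchy_def dist_endo.rep_eq)
  then obtain L where L: "(\<lambda>n. bl_of (X n)) \<longlonglongrightarrow> L"
    using convergent_eq_Cauchy by blast
  have "X \<longlonglongrightarrow> endo_of_bl L"
    using L by (simp add: LIMSEQ_def dist_endo.rep_eq endo_of_bl_inverse)
  then show "convergent X" by (auto simp: convergent_def)
qed


lemma exp_nat_scale: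
  fixes X :: "'a::{real_normed_algebra_1,banach}"
  shows "exp (of_nat n *\<^sub>R X) = exp X ^ n"
proof (induction n)
  case 0 then show ?case by simp
next
  case (Suc n)
  have "exp (of_nat (Suc n) *\<^sub>R X) = exp (X + of_nat n *\<^sub>R X)"
    by (simp add: algebra_simps)
  also have "\<dots> = exp X * exp (of_nat n *\<^sub>R X)"
    by (rule exp_add_commuting) (simp add: mult_scaleR_left mult_scaleR_right)
  finally show ?case using Suc by simp
qed

lemma pow_diff_bound:
  fixes P Q :: "'a::real_normed_algebra_1"
  assumes "norm P \<le> M" "norm Q \<le> M" "1 \<le> M"
  shows "norm (P^n - Q^n) \<le> real n * M^n * norm (P - Q)"
proof (induction n)
  case 0 then show ?case by simp
next
  case (Suc n)
  have eq: "P^Suc n - Q^Suc n = P * (P^n - Q^n) + (P - Q) * Q^n"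
    by (simp add: algebra_simps)
  have nQ: "norm (Q^n) \<le> M^n"
    by (meson assms(2) norm_ge_zero norm_power_ineq order_trans power_mono)
  have Mn: "M^n \<le> M^Suc n" using assms(3) by simp
  have M0: "0 \<le> M" using assms(3) by simp
  have "norm (P^Suc n - Q^Suc n) \<le> norm P * norm (P^n - Q^n) + norm (P - Q) * norm (Q^n)"
    unfolding eq by (meson norm_mult_ineq norm_triangle_le add_mono)
  also have "\<dots> \<le> M * (real n * M^n * norm (P - Q)) + norm (P - Q) * M^n"
    by (intro add_mono mult_mono Suc assms nQ) (auto simp: M0)
  also have "\<dots> \<le> real (Suc n) * M^Suc n * norm (P - Q)"
  proof -
    have "M^n * norm (P - Q) \<le> M^Suc n * norm (P - Q)"
      by (rule mult_right_mono[OF Mn]) simp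
    then show ?thesis by (simp add: algebra_simps)
  qed
  finally show ?case .
qed

lemma trotter:
  fixes A B :: "'a::{real_normed_algebra_1,banach}"
  shows "(\<lambda>n. (exp (inverse (real (Suc n)) *\<^sub>R A) * exp (inverse (real (Suc n)) *\<^sub>R B)) ^ Suc n)
           \<longlonglongrightarrow> exp (A + B)"
proof -
  define f where "f s = exp (s *\<^sub>R A) * exp (s *\<^sub>R B) - exp (s *\<^sub>R (A + B))" for s :: real
  have "(f has_vector_derivative 0) (at 0)"
  proof -
    have dA: "((\<lambda>s. exp (s *\<^sub>R A)) has_vector_derivative exp (0 *\<^sub>R A) * A) (at 0)"
      by (rule exp_scaleR_has_vector_derivative_right)
    have dB: "((\<lambda>s. exp (s *\<^sub>R B)) has_vector_derivative exp (0 *\<^sub>R B) * B) (at 0)"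
      by (rule exp_scaleR_has_vector_derivative_right)
    have dAB: "((\<lambda>s. exp (s *\<^sub>R (A + B))) has_vector_derivative exp (0 *\<^sub>R (A + B)) * (A + B)) (at 0)"
      by (rule exp_scaleR_has_vector_derivative_right)
    have "(f has_vector_derivative (exp (0 *\<^sub>R A) * (exp (0 *\<^sub>R B) * B) + (exp (0 *\<^sub>R A) * A) * exp (0 *\<^sub>R B)
        - exp (0 *\<^sub>R (A + B)) * (A + B))) (at 0)"
      unfolding f_def
      by (intro has_vector_derivative_diff has_vector_derivative_mult dA dB dAB)
    then show ?thesis by (simp add: algebra_simps)
  qed
  then have "((\<lambda>y. norm (f y - f 0 - 0) / norm (y - 0)) \<longlongrightarrow> 0) (at 0)"
    unfolding has_vector_derivative_def has_derivative_iff_norm by simp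
  then have L0: "((\<lambda>y. norm (f y) / \<bar>y\<bar>) \<longlongrightarrow> 0) (at 0)"
    by (simp add: f_def)
  define s where "s n = inverse (real (Suc n))" for n
  have sl: "filterlim s (at 0) sequentially"
    unfolding filterlim_at s_def using LIMSEQ_inverse_real_of_nat by auto
  have e0: "(\<lambda>n. norm (f (s n)) / \<bar>s n\<bar>) \<longlonglongrightarrow> 0"
    using filterlim_compose[OF L0 sl] by (simp add: o_def)
  define C where "C = exp (norm A + norm B)"
  show ?thesis
  proof (rule LIM_zero_cancel, rule Lim_null_comparison)
    show "(\<lambda>n. C * (norm (f (s n)) / \<bar>s n\<bar>)) \<longlonglongrightarrow> 0"
      using tendsto_mult_right_zero[OF e0] by simp
    show "\<forall>\<^sub>F n in sequentially. norm ((exp (inverse (real (Suc n)) *\<^sub>R A) * exp (inverse (real (Suc n)) *\<^sub>R B)) ^ Suc n - exp (A + B))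
         \<le> C * (norm (f (s n)) / \<bar>s n\<bar>)"
    proof (rule always_eventually, rule allI)
      fix n
      let ?N = "Suc n"
      let ?P = "exp (s n *\<^sub>R A) * exp (s n *\<^sub>R B)"
      let ?Q = "exp (s n *\<^sub>R (A + B))"
      define M where "M = exp (s n * (norm A + norm B))"
      have sp: "s n > 0" by (simp add: s_def)
      have "norm ?P \<le> norm (exp (s n *\<^sub>R A)) * norm (exp (s n *\<^sub>R B))" by (rule norm_mult_ineq)
      also have "\<dots> \<le> exp (norm (s n *\<^sub>R A)) * exp (norm (s n *\<^sub>R B))"
        by (intro mult_mono norm_exp) auto
      also have "\<dots> = M" using sp by (simp add: M_def exp_add[symmetric] algebra_simps)
      finally have nP: "norm ?P \<le> M" .
      have "norm ?Q \<le> exp (norm (s n *\<^sub>R (A + B)))" by (rule norm_exp)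
      also have "\<dots> \<le> M" using sp unfolding M_def
        by (simp add: mult_left_mono norm_triangle_ineq)
      finally have nQ: "norm ?Q \<le> M" .
      have M1: "1 \<le> M" using sp by (simp add: M_def)
      have MN: "M ^ ?N = C"
        unfolding M_def C_def exp_of_nat_mult[symmetric] using sp by (simp add: s_def)
      have QN: "?Q ^ ?N = exp (A + B)"
        unfolding exp_nat_scale[symmetric] using sp by (simp add: s_def)
      have "norm (?P ^ ?N - ?Q ^ ?N) \<le> real ?N * M ^ ?N * norm (?P - ?Q)"
        by (rule pow_diff_bound[OF nP nQ M1])
      also have "\<dots> = C * (norm (f (s n)) / \<bar>s n\<bar>)"
        unfolding MN by (simp add: f_def s_def field_simps)
      finally show "norm ((exp (inverse (real (Suc n)) *\<^sub>R A) * exp (inverse (real (Suc n)) *\<^sub>R B)) ^ Suc n - exp (A + B))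
         \<le> C * (norm (f (s n)) / \<bar>s n\<bar>)"
        using QN by (simp add: s_def)
    qed
  qed
qed


definition app :: "'a::euclidean_space endo \<Rightarrow> 'a \<Rightarrow> 'a" where
  "app E = blinfun_apply (bl_of E)"
definition Endo :: "('a::euclidean_space \<Rightarrow> 'a) \<Rightarrow> 'a endo" where
  "Endo L = endo_of_bl (Blinfun L)"

lemma app_Endo: "linear L \<Longrightarrow> app (Endo L) = L"
  unfolding app_def Endo_def
  by (simp add: endo_of_bl_inverse bounded_linear_Blinfun_apply linear_conv_bounded_linear)

lemma endo_eqI: "(\<And>x. app A x = app B x) \<Longrightarrow> A = B"
  unfolding app_def by (metis blinfun_eqI bl_of_inject)

lemma app_mult: "app (A * B) x = app A (app B x)"
  by (simp add: app_def times_endo.rep_eq)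
lemma app_one: "app 1 x = x"
  by (simp add: app_def one_endo.rep_eq)
lemma app_add: "app (A + B) x = app A x + app B x"
  by (simp add: app_def plus_endo.rep_eq blinfun.add_left)
lemma app_diff: "app (A - B) x = app A x - app B x"
  by (simp add: app_def minus_endo.rep_eq blinfun.diff_left)
lemma app_scaleR: "app (c *\<^sub>R A) x = c *\<^sub>R app A x"
  by (simp add: app_def scaleR_endo.rep_eq blinfun.scaleR_left)
lemma app_power: "app (A ^ n) x = (app A ^^ n) x"
  by (induction n arbitrary: x) (simp_all add: app_one app_mult)
lemma norm_app: "norm (app A x) \<le> norm A * norm x"
  by (simp add: app_def norm_endo.rep_eq norm_blinfun)
lemma linear_app: "linear (app A)"
  unfolding app_def by (simp add: bounded_linear.linear blinfun.bounded_linear_right)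
lemma bl_app: "bounded_linear (\<lambda>A. app A x)"
proof (rule bounded_linear_intro[where K="norm x"])
  show "app (A + B) x = app A x + app B x" for A B by (rule app_add)
  show "app (c *\<^sub>R A) x = c *\<^sub>R app A x" for c A by (rule app_scaleR)
  show "norm (app A x) \<le> norm A * norm x" for A by (rule norm_app)
qed

lemma lin_exp_sums:
  assumes "linear L"
  shows "(\<lambda>n. (1 / fact n) *\<^sub>R (L ^^ n) x) sums app (exp (Endo L)) x"
proof -
  have "(\<lambda>n. (Endo L) ^ n /\<^sub>R fact n) sums exp (Endo L)"
    unfolding exp_def by (rule summable_sums[OF summable_exp_generic])
  from bounded_linear.sums[OF bl_app this, of x]
  moreover have "app (Endo L ^ n /\<^sub>R fact n) x = (1 / fact n) *\<^sub>R (L ^^ n) x" for n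
    using assms by (simp add: app_scaleR app_power app_Endo divide_inverse_commute)
  ultimately show ?thesis by simp
qed

lemma lin_exp_app: "linear L \<Longrightarrow> lin_exp L = app (exp (Endo L))"
proof (rule ext)
  fix x assume "linear L"
  from sums_unique[OF lin_exp_sums[OF this, of x]]
  show "lin_exp L x = app (exp (Endo L)) x" unfolding lin_exp_def by simp
qed

lemma Endo_scale: "linear L \<Longrightarrow> Endo (\<lambda>y. c *\<^sub>R L y) = c *\<^sub>R Endo L"
proof (rule endo_eqI)
  fix x assume L: "linear L"
  have "linear (\<lambda>y. c *\<^sub>R L y)" using L by (auto simp: linear_iff scaleR_add_right)
  then show "app (Endo (\<lambda>y. c *\<^sub>R L y)) x = app (c *\<^sub>R Endo L) x"
    using L by (simp add: app_Endo app_scaleR)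
qed


lemma lb_lin1: "lie_bracket br \<Longrightarrow> linear (br x)"
  by (simp add: lie_bracket_def)
lemma lb_lin2: "lie_bracket br \<Longrightarrow> linear (\<lambda>x. br x y)"
  by (simp add: lie_bracket_def)

lemma br_add1: "lie_bracket br \<Longrightarrow> br (x + y) z = br x z + br y z"
  using lb_lin2[of br z] by (simp add: linear_iff)
lemma br_add2: "lie_bracket br \<Longrightarrow> br z (x + y) = br z x + br z y"
  using lb_lin1[of br z] by (simp add: linear_iff)
lemma br_scale1: "lie_bracket br \<Longrightarrow> br (c *\<^sub>R x) z = c *\<^sub>R br x z"
  using lb_lin2[of br z] by (simp add: linear_iff)
lemma br_scale2: "lie_bracket br \<Longrightarrow> br z (c *\<^sub>R x) = c *\<^sub>R br z x"
  using lb_lin1[of br z] by (simp add: linear_iff)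
lemma br_diff1: "lie_bracket br \<Longrightarrow> br (x - y) z = br x z - br y z"
  using br_add1[of br x "-y" z] br_scale1[of br "-1" y z] by simp
lemma br_diff2: "lie_bracket br \<Longrightarrow> br z (x - y) = br z x - br z y"
  using lb_lin1[of br z] by (simp add: linear_diff)
lemma br_zero1: "lie_bracket br \<Longrightarrow> br 0 z = 0"
  using br_scale1[of br 0 0 z] by simp
lemma br_zero2: "lie_bracket br \<Longrightarrow> br z 0 = 0"
  using lb_lin1[of br z] by (simp add: linear_0)

lemma br_self: "lie_bracket br \<Longrightarrow> br x x = 0"
  unfolding lie_bracket_def by blast
lemma br_jacobi: "lie_bracket br \<Longrightarrow> br x (br y z) + br y (br z x) + br z (br x y) = 0"
  unfolding lie_bracket_def by blast

lemma br_antisym: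
  assumes "lie_bracket br" shows "br y x = - br x y"
proof -
  have "0 = br (x + y) (x + y)" using br_self[OF assms] by simp
  also have "\<dots> = br x x + br x y + (br y x + br y y)"
    by (simp only: br_add1[OF assms] br_add2[OF assms] ac_simps)
  also have "\<dots> = br x y + br y x" by (simp add: br_self[OF assms])
  finally have "br x y + br y x = 0" by simp
  then show ?thesis by (simp add: eq_neg_iff_add_eq_0 add.commute)
qed

lemma br_jac:
  assumes "lie_bracket br" shows "br (br x y) w = br x (br y w) - br y (br x w)"
proof -
  have J: "br x (br y w) + br y (br w x) + br w (br x y) = 0"
    by (rule br_jacobi[OF assms])
  have "br w x = - br x w" by (rule br_antisym[OF assms])
  then have a: "br y (br w x) = - br y (br x w)"
    using br_scale2[OF assms, of y "-1" "br x w"] by simp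
  have b: "br w (br x y) = - br (br x y) w" by (rule br_antisym[OF assms])
  from J a b have "br x (br y w) - br y (br x w) - br (br x y) w = 0" by simp
  then show ?thesis by simp
qed

lemma trace_expand:
  assumes "linear f"
  shows "f (g b) \<bullet> b = (\<Sum>c\<in>Basis. (g b \<bullet> c) * (f c \<bullet> b))"
proof -
  have "f (g b) = f (\<Sum>c\<in>Basis. (g b \<bullet> c) *\<^sub>R c)" by (simp add: euclidean_representation)
  also have "\<dots> = (\<Sum>c\<in>Basis. (g b \<bullet> c) *\<^sub>R f c)"
    by (simp add: linear_sum[OF assms] linear_scale[OF assms])
  finally show ?thesis by (simp only: inner_sum_left inner_scaleR_left)
qed

lemma trace_comm:
  assumes "linear f" "linear g"
  shows "lin_trace (\<lambda>z. f (g z)) = lin_trace (\<lambda>z. g (f z))"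
proof -
  have "lin_trace (\<lambda>z. f (g z)) = (\<Sum>b\<in>Basis. f (g b) \<bullet> b)" by (simp only: lin_trace_def)
  also have "\<dots> = (\<Sum>b\<in>Basis. \<Sum>c\<in>Basis. (g b \<bullet> c) * (f c \<bullet> b))"
    by (rule sum.cong[OF refl], rule trace_expand[OF assms(1)])
  also have "\<dots> = (\<Sum>c\<in>Basis. \<Sum>b\<in>Basis. (g b \<bullet> c) * (f c \<bullet> b))"
    by (rule sum.swap)
  also have "\<dots> = (\<Sum>c\<in>Basis. \<Sum>b\<in>Basis. (f c \<bullet> b) * (g b \<bullet> c))"
    by (simp only: mult.commute)
  also have "\<dots> = (\<Sum>c\<in>Basis. g (f c) \<bullet> c)"
    by (rule sum.cong[OF refl], rule trace_expand[OF assms(2), symmetric])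
  also have "\<dots> = lin_trace (\<lambda>z. g (f z))" by (simp only: lin_trace_def)
  finally show ?thesis .
qed

lemma trace_diff: "lin_trace (\<lambda>z. f z - g z) = lin_trace f - lin_trace g"
  unfolding lin_trace_def by (simp add: inner_diff_left sum_subtractf)
lemma trace_add: "lin_trace (\<lambda>z. f z + g z) = lin_trace f + lin_trace g"
  unfolding lin_trace_def by (simp add: inner_add_left sum.distrib)
lemma trace_scale: "lin_trace (\<lambda>z. c *\<^sub>R f z) = c * lin_trace f"
  unfolding lin_trace_def by (simp add: sum_distrib_left)

lemma linear_brbr:
  assumes "lie_bracket br" shows "linear (\<lambda>w. br y (br z w))"
proof -
  have "linear (br y \<circ> br z)" by (rule linear_compose[OF lb_lin1[OF assms] lb_lin1[OF assms]])
  then show ?thesis by (simp add: o_def)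
qed

lemma killing_sym: "lie_bracket br \<Longrightarrow> killing br x y = killing br y x"
  unfolding killing_def by (rule trace_comm) (simp_all add: lb_lin1)

lemma killing_add2: "lie_bracket br \<Longrightarrow> killing br x (y + z) = killing br x y + killing br x z"
  unfolding killing_def by (simp add: br_add1 br_add2 trace_add)
lemma killing_scale2: "lie_bracket br \<Longrightarrow> killing br x (c *\<^sub>R y) = c * killing br x y"
  unfolding killing_def by (simp add: br_scale1 br_scale2 trace_scale)

lemma killing_inv:
  assumes lb: "lie_bracket br"
  shows "killing br (br x y) z = - killing br y (br x z)"
proof -
  have "killing br (br x y) z = lin_trace (\<lambda>w. br x (br y (br z w))) - lin_trace (\<lambda>w. br y (br x (br z w)))"
    unfolding killing_def br_jac[OF lb] by (rule trace_diff)
  moreover have "killing br y (br x z) = lin_trace (\<lambda>w. br y (br x (br z w))) - lin_trace (\<lambda>w. br y (br z (br x w)))"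
    unfolding killing_def br_jac[OF lb] br_diff2[OF lb] by (rule trace_diff)
  moreover have "lin_trace (\<lambda>w. br x (br y (br z w))) = lin_trace (\<lambda>w. br y (br z (br x w)))"
    using trace_comm[of "br x" "\<lambda>w. br y (br z w)"] lb by (simp add: lb_lin1 linear_brbr)
  ultimately show ?thesis by simp
qed

lemma linear_inv_bij:
  assumes "linear k" "bij k"
  shows "linear (inv k)"
proof -
  have kk: "k (inv k x) = x" for x using assms(2) by (simp add: bij_is_surj surj_f_inv_f)
  have ik: "inv k (k x) = x" for x using assms(2) by (simp add: bij_is_inj)
  show ?thesis unfolding linear_iff
  proof (intro conjI allI)
    fix x y
    have "inv k (x + y) = inv k (k (inv k x) + k (inv k y))" by (simp add: kk)
    also have "\<dots> = inv k (k (inv k x + inv k y))" by (simp only: linear_add[OF assms(1)])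
    also have "\<dots> = inv k x + inv k y" by (rule ik)
    finally show "inv k (x + y) = inv k x + inv k y" .
  next
    fix c x
    have "inv k (c *\<^sub>R x) = inv k (c *\<^sub>R k (inv k x))" by (simp add: kk)
    also have "\<dots> = inv k (k (c *\<^sub>R inv k x))" by (simp only: linear_scale[OF assms(1)])
    also have "\<dots> = c *\<^sub>R inv k x" by (rule ik)
    finally show "inv k (c *\<^sub>R x) = c *\<^sub>R inv k x" .
  qed
qed

lemma killing_aut:
  assumes lb: "lie_bracket br" and k: "linear k" "bij k" "\<forall>x y. k (br x y) = br (k x) (k y)"
  shows "killing br (k x) (k y) = killing br x y"
proof -
  have kk: "k (inv k x) = x" for x using k(2) by (simp add: bij_is_surj surj_f_inv_f)
  have ik: "inv k (k x) = x" for x using k(2) by (simp add: bij_is_inj)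
  have "br (k x) (br (k y) z) = k (br x (br y (inv k z)))" for z
  proof -
    have "br (k x) (br (k y) z) = br (k x) (br (k y) (k (inv k z)))" by (simp add: kk)
    also have "\<dots> = k (br x (br y (inv k z)))" by (simp add: k(3))
    finally show ?thesis .
  qed
  then have "killing br (k x) (k y) = lin_trace (\<lambda>z. k ((\<lambda>w. br x (br y (inv k w))) z))"
    unfolding killing_def by simp
  also have "\<dots> = lin_trace (\<lambda>z. (\<lambda>w. br x (br y (inv k w))) (k z))"
  proof (rule trace_comm[OF k(1)])
    show "linear (\<lambda>w. br x (br y (inv k w)))"
      using linear_compose[OF linear_inv_bij[OF k(1,2)] linear_brbr[OF lb, of x y]] by (simp add: o_def)
  qed
  also have "\<dots> = killing br x y" by (simp add: killing_def ik)
  finally show ?thesis .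
qed


section \<open>The Lie algebra of Ad(H)\<close>

definition adE :: "('g::euclidean_space \<Rightarrow> 'g \<Rightarrow> 'g) \<Rightarrow> 'g \<Rightarrow> 'g endo" where
  "adE br X = Endo (br X)"

lemma app_adE: "lie_bracket br \<Longrightarrow> app (adE br X) = br X"
  unfolding adE_def by (simp add: app_Endo lb_lin1)

lemma adE_add: "lie_bracket br \<Longrightarrow> adE br (X + Y) = adE br X + adE br Y"
  by (rule endo_eqI) (simp add: app_adE app_add br_add1)
lemma adE_scale: "lie_bracket br \<Longrightarrow> adE br (c *\<^sub>R X) = c *\<^sub>R adE br X"
  by (rule endo_eqI) (simp add: app_adE app_scaleR br_scale1)
lemma app_zero: "app 0 x = 0"
  by (simp add: app_def zero_endo.rep_eq)
lemma adE_zero: "lie_bracket br \<Longrightarrow> adE br 0 = 0"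
  by (rule endo_eqI) (simp add: app_adE br_zero1 app_zero)

lemma lin_exp_ad:
  assumes "lie_bracket br"
  shows "lin_exp (\<lambda>y. t *\<^sub>R br X y) = app (exp (t *\<^sub>R adE br X))"
proof -
  have L: "linear (br X)" using assms by (rule lb_lin1)
  then have "linear (\<lambda>y. t *\<^sub>R br X y)" by (auto simp: linear_iff scaleR_add_right)
  then have "lin_exp (\<lambda>y. t *\<^sub>R br X y) = app (exp (Endo (\<lambda>y. t *\<^sub>R br X y)))"
    by (rule lin_exp_app)
  also have "\<dots> = app (exp (t *\<^sub>R adE br X))"
    using Endo_scale[OF L] by (simp add: adE_def)
  finally show ?thesis .
qed

lemma h_iff:
  assumes "lie_bracket br"
  shows "X \<in> lie_alg_of br AdH \<longleftrightarrow> (\<forall>t. app (exp (t *\<^sub>R adE br X)) \<in> AdH)"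
  unfolding lie_alg_of_def using lin_exp_ad[OF assms] by simp

lemma app_one_id: "app 1 = id"
  by (rule ext) (simp add: app_one)
lemma app_mult_o: "app (A * B) = app A \<circ> app B"
  by (rule ext) (simp add: app_mult)

lemma AdH_mult:
  assumes "closed_adjoint_subgroup br AdH" "app P \<in> AdH" "app Q \<in> AdH"
  shows "app (P * Q) \<in> AdH"
  using assms unfolding closed_adjoint_subgroup_def app_mult_o by blast

lemma AdH_pow:
  assumes "closed_adjoint_subgroup br AdH" "app P \<in> AdH"
  shows "app (P ^ n) \<in> AdH"
proof (induction n)
  case 0
  have "id \<in> AdH" using assms(1) unfolding closed_adjoint_subgroup_def by blast
  then show ?case by (simp only: power_0 app_one_id)
next
  case (Suc n) then show ?case using AdH_mult[OF assms(1,2)] by simp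
qed

lemma h_zero:
  assumes "lie_bracket br" "closed_adjoint_subgroup br AdH"
  shows "0 \<in> lie_alg_of br AdH"
proof -
  have "id \<in> AdH" using assms(2) unfolding closed_adjoint_subgroup_def by blast
  then show ?thesis unfolding h_iff[OF assms(1)] adE_zero[OF assms(1)] scaleR_zero_right exp_zero app_one_id by blast
qed

lemma h_scale:
  assumes "lie_bracket br" "X \<in> lie_alg_of br AdH"
  shows "c *\<^sub>R X \<in> lie_alg_of br AdH"
  using assms by (simp add: h_iff adE_scale)

lemma h_add:
  assumes lb: "lie_bracket br" and cas: "closed_adjoint_subgroup br AdH"
    and X: "X \<in> lie_alg_of br AdH" and Y: "Y \<in> lie_alg_of br AdH"
  shows "X + Y \<in> lie_alg_of br AdH"
  unfolding h_iff[OF lb]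
proof
  fix t
  define A where "A = t *\<^sub>R adE br X"
  define B where "B = t *\<^sub>R adE br Y"
  define K where "K n = app ((exp (inverse (real (Suc n)) *\<^sub>R A) * exp (inverse (real (Suc n)) *\<^sub>R B)) ^ Suc n)" for n
  have cl: "\<forall>K k. (\<forall>n. K n \<in> AdH) \<longrightarrow> linear k \<longrightarrow> (\<forall>x. (\<lambda>n. K n x) \<longlonglongrightarrow> k x) \<longrightarrow> k \<in> AdH"
    using cas unfolding closed_adjoint_subgroup_def by blast
  have Kin: "\<forall>n. K n \<in> AdH"
  proof
    fix n
    have "app (exp (inverse (real (Suc n)) *\<^sub>R A)) \<in> AdH"
      using X unfolding h_iff[OF lb] A_def scaleR_scaleR by blast
    moreover have "app (exp (inverse (real (Suc n)) *\<^sub>R B)) \<in> AdH"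
      using Y unfolding h_iff[OF lb] B_def scaleR_scaleR by blast
    ultimately show "K n \<in> AdH" unfolding K_def by (intro AdH_pow[OF cas] AdH_mult[OF cas])
  qed
  have conv: "\<forall>x. (\<lambda>n. K n x) \<longlonglongrightarrow> app (exp (A + B)) x"
    unfolding K_def by (intro allI bounded_linear.tendsto[OF bl_app trotter])
  have AB: "A + B = t *\<^sub>R adE br (X + Y)"
    by (simp add: A_def B_def adE_add[OF lb] scaleR_add_right)
  show "app (exp (t *\<^sub>R adE br (X + Y))) \<in> AdH"
  proof -
    have "app (exp (A + B)) \<in> AdH"
      using cl Kin conv linear_app[of "exp (A + B)"] by blast
    then show ?thesis unfolding AB .
  qed
qed

lemma subspace_h:
  assumes lb: "lie_bracket br" and cas: "closed_adjoint_subgroup br AdH"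
  shows "subspace (lie_alg_of br AdH)"
  unfolding subspace_def using h_zero[OF lb cas] h_add[OF lb cas] h_scale[OF lb] by blast


section \<open>Ad(H) acts on h and m\<close>

lemma cas_facts:
  assumes "closed_adjoint_subgroup br AdH" "k \<in> AdH"
  shows "linear k" "bij k" "\<forall>x y. k (br x y) = br (k x) (k y)" "inv k \<in> AdH"
  using assms unfolding closed_adjoint_subgroup_def by blast+

lemma cas_comp:
  assumes "closed_adjoint_subgroup br AdH" "k \<in> AdH" "l \<in> AdH"
  shows "k \<circ> l \<in> AdH"
  using assms unfolding closed_adjoint_subgroup_def by blast

lemma AdH_conj_h:
  assumes lb: "lie_bracket br" and cas: "closed_adjoint_subgroup br AdH"
    and kA: "k \<in> AdH" and X: "X \<in> lie_alg_of br AdH"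
  shows "k X \<in> lie_alg_of br AdH"
  unfolding lie_alg_of_def
proof (rule, rule)
  fix t :: real
  note kf = cas_facts[OF cas kA]
  have kk: "k (inv k x) = x" for x using kf(2) by (simp add: bij_is_surj surj_f_inv_f)
  define L where "L = (\<lambda>y. t *\<^sub>R br X y)"
  define L' where "L' = (\<lambda>y. t *\<^sub>R br (k X) y)"
  have linL: "linear L" unfolding L_def using lb_lin1[OF lb, of X] by (auto simp: linear_iff scaleR_add_right)
  have linL': "linear L'" unfolding L'_def using lb_lin1[OF lb, of "k X"] by (auto simp: linear_iff scaleR_add_right)
  have pw: "(L' ^^ n) y = k ((L ^^ n) (inv k y))" for n y
  proof (induction n)
    case 0 then show ?case by (simp add: kk)
  next
    case (Suc n)
    have "(L' ^^ Suc n) y = t *\<^sub>R br (k X) (k ((L ^^ n) (inv k y)))"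
      using Suc by (simp add: L'_def)
    also have "\<dots> = t *\<^sub>R k (br X ((L ^^ n) (inv k y)))" using kf(3) by simp
    also have "\<dots> = k (t *\<^sub>R br X ((L ^^ n) (inv k y)))" by (simp add: linear_scale[OF kf(1)])
    also have "\<dots> = k ((L ^^ Suc n) (inv k y))" by (simp add: L_def)
    finally show ?case .
  qed
  have eq: "lin_exp L' y = k (lin_exp L (inv k y))" for y
  proof -
    have s1: "(\<lambda>n. (1 / fact n) *\<^sub>R (L ^^ n) (inv k y)) sums lin_exp L (inv k y)"
      using lin_exp_sums[OF linL] lin_exp_app[OF linL] by simp
    have bk: "bounded_linear k" using kf(1) by (simp add: linear_conv_bounded_linear)
    have "(\<lambda>n. k ((1 / fact n) *\<^sub>R (L ^^ n) (inv k y))) sums k (lin_exp L (inv k y))"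
      by (rule bounded_linear.sums[OF bk s1])
    then have "(\<lambda>n. (1 / fact n) *\<^sub>R (L' ^^ n) y) sums k (lin_exp L (inv k y))"
      by (simp add: pw linear_scale[OF kf(1)])
    moreover have "(\<lambda>n. (1 / fact n) *\<^sub>R (L' ^^ n) y) sums lin_exp L' y"
      using lin_exp_sums[OF linL'] lin_exp_app[OF linL'] by simp
    ultimately show ?thesis using sums_unique2 by blast
  qed
  have "lin_exp L' = (k \<circ> lin_exp L) \<circ> inv k"
    by (rule ext) (simp add: eq)
  moreover have "lin_exp L \<in> AdH" using X unfolding lie_alg_of_def L_def by blast
  ultimately show "lin_exp (\<lambda>y. t *\<^sub>R br (k X) y) \<in> AdH"
    unfolding L'_def using cas_comp[OF cas] kA kf(4) by metis
qed

lemma Qform_aut: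
  assumes lb: "lie_bracket br" and cas: "closed_adjoint_subgroup br AdH" and kA: "k \<in> AdH"
  shows "Qform br (k x) (k y) = Qform br x y"
  unfolding Qform_def using killing_aut[OF lb cas_facts(1-3)[OF cas kA]] by simp

lemma AdH_m:
  assumes lb: "lie_bracket br" and cas: "closed_adjoint_subgroup br AdH" and kA: "k \<in> AdH"
    and v: "v \<in> mcompl br (lie_alg_of br AdH)"
  shows "k v \<in> mcompl br (lie_alg_of br AdH)"
  unfolding mcompl_def
proof (rule, rule)
  fix x assume x: "x \<in> lie_alg_of br AdH"
  note kf = cas_facts[OF cas kA]
  have kk: "k (inv k x) = x" using kf(2) by (simp add: bij_is_surj surj_f_inv_f)
  have "inv k x \<in> lie_alg_of br AdH" by (rule AdH_conj_h[OF lb cas kf(4) x])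
  then have "Qform br (inv k x) v = 0" using v unfolding mcompl_def by blast
  then show "Qform br x (k v) = 0" using Qform_aut[OF lb cas kA, of "inv k x" v] kk by simp
qed

lemma curve_deriv:
  assumes lb: "lie_bracket br"
  shows "((\<lambda>t. lin_exp (\<lambda>y. t *\<^sub>R br x y) u) has_vector_derivative br x u) (at 0)"
proof -
  have "((\<lambda>t. app (exp (t *\<^sub>R adE br x)) u) has_vector_derivative app (exp (0 *\<^sub>R adE br x) * adE br x) u) (at 0)"
    by (rule bounded_linear.has_vector_derivative[OF bl_app exp_scaleR_has_vector_derivative_right])
  then show ?thesis by (simp add: lin_exp_ad[OF lb] app_one app_adE[OF lb])
qed


section \<open>The form Q and Riesz representation\<close>

lemma Q_sym: "lie_bracket br \<Longrightarrow> Qform br x y = Qform br y x"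
  unfolding Qform_def using killing_sym by metis

lemma Q_lin2: assumes "lie_bracket br" shows "linear (Qform br x)"
  unfolding linear_iff Qform_def using killing_add2[OF assms] killing_scale2[OF assms] by simp

lemma Q_lin1: assumes "lie_bracket br" shows "linear (\<lambda>x. Qform br x y)"
proof -
  have "(\<lambda>x. Qform br x y) = Qform br y" by (rule ext) (simp add: Q_sym[OF assms])
  then show ?thesis using Q_lin2[OF assms] by simp
qed

lemma Q_inv: "lie_bracket br \<Longrightarrow> Qform br (br x y) z = - Qform br y (br x z)"
  unfolding Qform_def using killing_inv[of br x y z] by simp

lemma riesz_sub:
  fixes q :: "'a::euclidean_space \<Rightarrow> 'a \<Rightarrow> real"
  assumes V: "subspace V" and ql: "\<And>x. linear (q x)" and qs: "\<And>x y. q x y = q y x"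
    and qp: "\<And>x. x \<in> V \<Longrightarrow> x \<noteq> 0 \<Longrightarrow> q x x > 0" and l: "linear l"
  shows "\<exists>w\<in>V. \<forall>v\<in>V. q w v = l v"
proof -
  obtain B where B: "B \<subseteq> V" "independent B" "V \<subseteq> span B" "card B = dim V"
    by (rule basis_exists)
  have fB: "finite B" using B(2) by (rule finiteI_independent)
  have spB: "span B = V" using span_subspace[OF B(1) B(3) V] .
  have ql1: "linear (\<lambda>x. q x y)" for y
  proof -
    have "(\<lambda>x. q x y) = q y" by (rule ext) (simp add: qs)
    then show ?thesis using ql by simp
  qed
  have vanish: "f v = 0" if "linear f" "\<And>b. b \<in> B \<Longrightarrow> f b = 0" "v \<in> V" for f v
  proof -
    have "v \<in> span B" using that(3) spB by simp
    then show ?thesis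
    proof (induction rule: span_induct_alt)
      case base then show ?case using linear_0[OF that(1)] by simp
    next
      case (step c x y)
      then show ?case using that(2) by (simp add: linear_add[OF that(1)] linear_scale[OF that(1)])
    qed
  qed
  have indep0: "u b = 0" if "(\<Sum>b\<in>B. u b *\<^sub>R b) = 0" "b \<in> B" for u b
    using B(2) fB that dependent_finite by blast
  define T where "T w = (\<Sum>b\<in>B. q w b *\<^sub>R b)" for w
  have linT: "linear T"
    unfolding T_def linear_iff
    by (simp add: linear_add[OF ql1] linear_scale[OF ql1] scaleR_add_left sum.distrib scaleR_sum_right)
  have TV: "T ` V \<subseteq> V"
    unfolding T_def using B(1) by (auto intro!: subspace_sum[OF V] subspace_scale[OF V])
  have injT: "inj_on T (span V)"
  proof -
    have "w = 0" if "w \<in> V" "T w = 0" for w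
    proof -
      have "q w b = 0" if "b \<in> B" for b using indep0[of "q w"] \<open>T w = 0\<close> that unfolding T_def by blast
      then have "q w w = 0" using vanish[OF ql, of w w] \<open>w \<in> V\<close> by blast
      then show ?thesis using qp[OF \<open>w \<in> V\<close>] by fastforce
    qed
    moreover have "span V = V" using V by simp
    ultimately show ?thesis
      unfolding inj_on_def using linear_diff[OF linT] subspace_diff[OF V] by (metis eq_iff_diff_eq_0)
  qed
  have "dim (T ` V) = dim V" by (rule dim_image_eq[OF linT injT])
  then have TVe: "T ` V = V"
    using subspace_dim_equal[OF linear_subspace_image[OF linT V] V TV] by simp
  define y0 where "y0 = (\<Sum>b\<in>B. l b *\<^sub>R b)"
  have "y0 \<in> V" unfolding y0_def using B(1) by (auto intro!: subspace_sum[OF V] subspace_scale[OF V])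
  then obtain w where w: "w \<in> V" "T w = y0" using TVe by (metis imageE)
  have "(\<Sum>b\<in>B. (q w b - l b) *\<^sub>R b) = 0"
    using w(2) unfolding T_def y0_def by (simp add: scaleR_diff_left sum_subtractf)
  then have wb: "q w b - l b = 0" if "b \<in> B" for b using indep0[of "\<lambda>b. q w b - l b"] that by blast
  have "linear (\<lambda>v. q w v - l v)" using ql l by (rule linear_compose_sub)
  then have "\<forall>v\<in>V. q w v - l v = 0" using vanish wb by blast
  then show ?thesis using w(1) by auto
qed


section \<open>The decomposition g = h + m\<close>

lemma Q_pos:
  assumes "\<forall>x. x \<noteq> 0 \<longrightarrow> killing br x x < 0" "x \<noteq> 0"
  shows "Qform br x x > 0"
  using assms unfolding Qform_def by simp

lemma subspace_m:
  assumes lb: "lie_bracket br"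
  shows "subspace (mcompl br h)"
  unfolding subspace_def mcompl_def
  by (simp add: linear_0[OF Q_lin2[OF lb]] linear_add[OF Q_lin2[OF lb]] linear_scale[OF Q_lin2[OF lb]])

lemma m_h_zero:
  assumes lb: "lie_bracket br" and neg: "\<forall>x. x \<noteq> 0 \<longrightarrow> killing br x x < 0"
    and "d \<in> mcompl br h" "d \<in> h"
  shows "d = 0"
proof (rule ccontr)
  assume "d \<noteq> 0"
  then have "Qform br d d > 0" using Q_pos[OF neg] by blast
  moreover have "Qform br d d = 0" using assms(3,4) unfolding mcompl_def by blast
  ultimately show False by simp
qed

lemma mpart_props:
  assumes lb: "lie_bracket br" and neg: "\<forall>x. x \<noteq> 0 \<longrightarrow> killing br x x < 0"
    and cas: "closed_adjoint_subgroup br AdH"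
  shows "mpart br (lie_alg_of br AdH) X \<in> mcompl br (lie_alg_of br AdH)
       \<and> X - mpart br (lie_alg_of br AdH) X \<in> lie_alg_of br AdH"
proof -
  let ?h = "lie_alg_of br AdH"
  have hs: "subspace ?h" by (rule subspace_h[OF lb cas])
  obtain p where p: "p \<in> ?h" "\<forall>v\<in>?h. Qform br p v = Qform br X v"
    using riesz_sub[OF hs Q_lin2[OF lb] Q_sym[OF lb] Q_pos[OF neg] Q_lin2[OF lb]] by blast
  have ex: "X - p \<in> mcompl br ?h \<and> X - (X - p) \<in> ?h"
  proof
    show "X - p \<in> mcompl br ?h"
      unfolding mcompl_def
    proof (rule, rule)
      fix x assume "x \<in> ?h"
      then have "Qform br x X = Qform br x p" using p(2) Q_sym[OF lb] by metis
      then show "Qform br x (X - p) = 0" by (simp add: linear_diff[OF Q_lin2[OF lb]])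
    qed
    show "X - (X - p) \<in> ?h" using p(1) by simp
  qed
  have un: "w1 = w2" if "w1 \<in> mcompl br ?h \<and> X - w1 \<in> ?h" "w2 \<in> mcompl br ?h \<and> X - w2 \<in> ?h" for w1 w2
  proof -
    have "w1 - w2 \<in> ?h" using subspace_diff[OF hs, of "X - w2" "X - w1"] that by simp
    moreover have "w1 - w2 \<in> mcompl br ?h" using subspace_diff[OF subspace_m[OF lb]] that by blast
    ultimately show ?thesis using m_h_zero[OF lb neg] by fastforce
  qed
  show ?thesis unfolding mpart_def
    by (rule theI[of _ "X - p"]) (use ex un in blast)+
qed

lemma metric_op_props:
  assumes lb: "lie_bracket br" and neg: "\<forall>x. x \<noteq> 0 \<longrightarrow> killing br x x < 0"
    and ft: "\<forall>v\<in>mcompl br h. fund_tensor F y u v = l v" and l: "linear l"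
  shows "metric_op br (mcompl br h) F y u \<in> mcompl br h
     \<and> (\<forall>v\<in>mcompl br h. Qform br (metric_op br (mcompl br h) F y u) v = l v)"
proof -
  let ?m = "mcompl br h"
  have ms: "subspace ?m" by (rule subspace_m[OF lb])
  obtain w where w: "w \<in> ?m" "\<forall>v\<in>?m. Qform br w v = l v"
    using riesz_sub[OF ms Q_lin2[OF lb] Q_sym[OF lb] Q_pos[OF neg] l] by blast
  have P: "w \<in> ?m \<and> (\<forall>v\<in>?m. fund_tensor F y u v = Qform br w v)" using w ft by simp
  have un: "w1 = w2" if "w1 \<in> ?m \<and> (\<forall>v\<in>?m. fund_tensor F y u v = Qform br w1 v)"
      "w2 \<in> ?m \<and> (\<forall>v\<in>?m. fund_tensor F y u v = Qform br w2 v)" for w1 w2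
  proof -
    have d: "w1 - w2 \<in> ?m" using subspace_diff[OF ms] that by blast
    have "Qform br (w1 - w2) (w1 - w2) = 0"
      using that d by (simp add: linear_diff[OF Q_lin1[OF lb]])
    then show ?thesis using Q_pos[OF neg, of "w1 - w2"] by (cases "w1 - w2 = 0") auto
  qed
  have "metric_op br ?m F y u = w" unfolding metric_op_def
    by (rule the_equality) (use P un in blast)+
  then show ?thesis using w by simp
qed


section \<open>The fundamental tensor at (u,u)\<close>

lemma fund_tensor_uu:
  fixes F Fe :: "'a::euclidean_space \<Rightarrow> real"
  assumes msub: "subspace m" and hom: "\<forall>y\<in>m. \<forall>c>0. F (c *\<^sub>R y) = c * F y"
    and Fe: "\<forall>y\<in>m. Fe y = F y" and dF: "(Fe has_derivative f') (at u)"
    and u: "u \<in> m" and w: "w \<in> m"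
  shows "fund_tensor F u u w = F u * f' w"
proof -
  have lf: "linear f'" using dF by (simp add: has_derivative_linear)
  define \<phi> where "\<phi> r = (Fe (u + r *\<^sub>R w))\<^sup>2" for r
  define D where "D = 2 * Fe u * f' w"
  have g: "((\<lambda>r. u + r *\<^sub>R w) has_derivative (\<lambda>r. r *\<^sub>R w)) (at 0)"
    by (auto intro!: derivative_eq_intros)
  have dF': "(Fe has_derivative f') (at (u + 0 *\<^sub>R w))" using dF by simp
  have "((\<lambda>r. Fe (u + r *\<^sub>R w)) has_derivative (\<lambda>r. f' (r *\<^sub>R w))) (at 0)"
    by (rule has_derivative_compose[OF g dF'])
  moreover have "(\<lambda>r. f' (r *\<^sub>R w)) = (*) (f' w)"
    by (rule ext) (simp add: linear_scale[OF lf])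
  ultimately have d1: "((\<lambda>r. Fe (u + r *\<^sub>R w)) has_field_derivative f' w) (at 0)"
    by (simp add: has_field_derivative_def)
  have dphi: "(\<phi> has_field_derivative D) (at 0)"
  proof -
    have "((\<lambda>r. (Fe (u + r *\<^sub>R w)) ^ 2) has_field_derivative (of_nat 2 * (f' w * (Fe (u + 0 *\<^sub>R w)) ^ (2 - Suc 0)))) (at 0)"
      by (rule DERIV_power[OF d1])
    then show ?thesis unfolding \<phi>_def[abs_def] D_def by (simp add: ac_simps)
  qed
  have inner: "deriv (\<lambda>t. (F (u + s *\<^sub>R u + t *\<^sub>R w))\<^sup>2) 0 = (1 + s) * D" if s: "s > -1" for s
  proof -
    define \<sigma> where "\<sigma> = 1 + s"
    have sp: "\<sigma> > 0" using s by (simp add: \<sigma>_def)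
    have eqf: "(F (u + s *\<^sub>R u + t *\<^sub>R w))\<^sup>2 = \<sigma>\<^sup>2 * \<phi> (t / \<sigma>)" for t
    proof -
      have z: "u + (t / \<sigma>) *\<^sub>R w \<in> m" using msub u w by (simp add: subspace_add subspace_scale)
      have "u + s *\<^sub>R u + t *\<^sub>R w = \<sigma> *\<^sub>R (u + (t / \<sigma>) *\<^sub>R w)"
      proof -
        have "\<sigma> * (t / \<sigma>) = t" using sp by simp
        then show ?thesis by (simp add: \<sigma>_def algebra_simps scaleR_add_right)
      qed
      then have "F (u + s *\<^sub>R u + t *\<^sub>R w) = \<sigma> * Fe (u + (t / \<sigma>) *\<^sub>R w)"
        using hom z sp Fe by simp
      then show ?thesis by (simp add: \<phi>_def power_mult_distrib)
    qed
    have dd: "((\<lambda>t. t / \<sigma>) has_field_derivative 1 / \<sigma>) (at 0)"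
      using sp by (auto intro!: derivative_eq_intros)
    have dphi': "(\<phi> has_field_derivative D) (at ((\<lambda>t. t / \<sigma>) 0))" using dphi by simp
    have "((\<lambda>t. \<phi> (t / \<sigma>)) has_field_derivative D * (1 / \<sigma>)) (at 0)"
      using DERIV_chain2[OF dphi' dd] by simp
    then have "((\<lambda>t. \<sigma>\<^sup>2 * \<phi> (t / \<sigma>)) has_field_derivative \<sigma>\<^sup>2 * (D * (1 / \<sigma>))) (at 0)"
      by (rule DERIV_cmult)
    moreover have "\<sigma>\<^sup>2 * (D * (1 / \<sigma>)) = (1 + s) * D" using sp by (simp add: \<sigma>_def power2_eq_square)
    ultimately have "((\<lambda>t. (F (u + s *\<^sub>R u + t *\<^sub>R w))\<^sup>2) has_field_derivative (1 + s) * D) (at 0)"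
      using eqf by simp
    then show ?thesis by (rule DERIV_imp_deriv)
  qed
  have "((\<lambda>s. (1 + s) * D) has_field_derivative D) (at 0)"
    by (auto intro!: derivative_eq_intros)
  then have "((\<lambda>s. deriv (\<lambda>t. (F (u + s *\<^sub>R u + t *\<^sub>R w))\<^sup>2) 0) has_field_derivative D) (at 0)"
    by (rule has_field_derivative_transform_within_open[where S="{-1<..}"]) (auto simp: inner)
  then have "deriv (\<lambda>s. deriv (\<lambda>t. (F (u + s *\<^sub>R u + t *\<^sub>R w))\<^sup>2) 0) 0 = D"
    by (rule DERIV_imp_deriv)
  then show ?thesis unfolding fund_tensor_def D_def using Fe u by simp
qed


section \<open>Infinitesimal invariance\<close>

lemma invariance:
  assumes lb: "lie_bracket br" and cas: "closed_adjoint_subgroup br AdH"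
    and inv5: "\<forall>k\<in>AdH. \<forall>y\<in>mcompl br (lie_alg_of br AdH). F (k y) = F y"
    and Fe: "\<forall>y\<in>mcompl br (lie_alg_of br AdH). Fe y = F y"
    and dF: "(Fe has_derivative f') (at u)"
    and u: "u \<in> mcompl br (lie_alg_of br AdH)" and x: "x \<in> lie_alg_of br AdH"
  shows "br x u \<in> mcompl br (lie_alg_of br AdH) \<and> f' (br x u) = 0"
proof -
  let ?h = "lie_alg_of br AdH"
  let ?m = "mcompl br ?h"
  define \<gamma> where "\<gamma> t = lin_exp (\<lambda>y. t *\<^sub>R br x y) u" for t
  have kin: "lin_exp (\<lambda>y. t *\<^sub>R br x y) \<in> AdH" for t using x unfolding lie_alg_of_def by blast
  have gm: "\<gamma> t \<in> ?m" for t unfolding \<gamma>_def by (rule AdH_m[OF lb cas kin u])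
  have g0: "\<gamma> 0 = u" unfolding \<gamma>_def lin_exp_ad[OF lb] by (simp add: app_one)
  have dg: "(\<gamma> has_derivative (\<lambda>t. t *\<^sub>R br x u)) (at 0)"
    using curve_deriv[OF lb, of x u] unfolding has_vector_derivative_def \<gamma>_def[abs_def] .
  have Fg: "Fe (\<gamma> t) = F u" for t
  proof -
    have "Fe (\<gamma> t) = F (\<gamma> t)" using Fe gm by blast
    also have "\<dots> = F u" using inv5 kin u unfolding \<gamma>_def by blast
    finally show ?thesis .
  qed
  have dF0: "(Fe has_derivative f') (at (\<gamma> 0))" using dF g0 by simp
  have "((\<lambda>t. Fe (\<gamma> t)) has_derivative (\<lambda>t. f' (t *\<^sub>R br x u))) (at 0)"
    by (rule has_derivative_compose[OF dg dF0])
  moreover have "((\<lambda>t. Fe (\<gamma> t)) has_derivative (\<lambda>t. 0)) (at 0)"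
    unfolding Fg by (rule has_derivative_const)
  ultimately have "(\<lambda>t. f' (t *\<^sub>R br x u)) = (\<lambda>t. 0)" by (rule has_derivative_unique)
  then have f0: "f' (br x u) = 0" by (metis scaleR_one)
  have "Qform br y (br x u) = 0" if y: "y \<in> ?h" for y
  proof -
    have bl: "bounded_linear (Qform br y)" using Q_lin2[OF lb] by (simp add: linear_conv_bounded_linear)
    have "((\<lambda>t. Qform br y (\<gamma> t)) has_derivative (\<lambda>t. Qform br y (t *\<^sub>R br x u))) (at 0)"
      by (rule bounded_linear.has_derivative[OF bl dg])
    moreover have "(\<lambda>t. Qform br y (\<gamma> t)) = (\<lambda>t. 0)"
      using gm y unfolding mcompl_def by blast
    ultimately have "((\<lambda>t. 0) has_derivative (\<lambda>t. Qform br y (t *\<^sub>R br x u))) (at 0)" by simp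
    moreover have "((\<lambda>t. 0::real) has_derivative (\<lambda>t. 0)) (at 0)" by (rule has_derivative_const)
    ultimately have "(\<lambda>t. Qform br y (t *\<^sub>R br x u)) = (\<lambda>t. 0)" by (rule has_derivative_unique)
    then show ?thesis by (metis scaleR_one)
  qed
  then have "br x u \<in> ?m" unfolding mcompl_def by blast
  then show ?thesis using f0 by blast
qed

theorem lemma3p4:
  fixes br :: "'g::euclidean_space \<Rightarrow> 'g \<Rightarrow> 'g"
    and AdH :: "('g \<Rightarrow> 'g) set"
    and F :: "'g \<Rightarrow> real"
  assumes "lie_bracket br"
    and "\<forall>x. x \<noteq> 0 \<longrightarrow> killing br x x < 0"
    and "closed_adjoint_subgroup br AdH"
    and "minkowski_norm_on (mcompl br (lie_alg_of br AdH)) F"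
    and "\<forall>k\<in>AdH. \<forall>y\<in>mcompl br (lie_alg_of br AdH). F (k y) = F y"
  shows "naturally_reductive br (lie_alg_of br AdH) F \<longleftrightarrow>
    (\<forall>u\<in>mcompl br (lie_alg_of br AdH) - {0}.
       br u (metric_op br (mcompl br (lie_alg_of br AdH)) F u u) = 0)"
proof -
  note lb = assms(1) and neg = assms(2) and cas = assms(3) and inv5 = assms(5)
  let ?h = "lie_alg_of br AdH"
  let ?m = "mcompl br ?h"
  define A where "A u = metric_op br ?m F u u" for u
  have ms: "subspace ?m" by (rule subspace_m[OF lb])
  have hom: "\<forall>y\<in>?m. \<forall>c>0. F (c *\<^sub>R y) = c * F y"
    using assms(4) unfolding minkowski_norm_on_def by blast
  obtain S Fe where S: "open S" "?m - {0} \<subseteq> S" "smooth_on S Fe" and Fe: "\<forall>y\<in>?m. Fe y = F y"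
    using assms(4) unfolding minkowski_norm_on_def by blast
  have "Fe \<in> higher_dirderivs 0 Fe" by simp
  then have Fed: "Fe differentiable_on S"
    using S(3) unfolding smooth_on_def by blast
  have key: "\<exists>f'. (Fe has_derivative f') (at u) \<and> A u \<in> ?m
      \<and> (\<forall>v\<in>?m. fund_tensor F u u v = F u * f' v \<and> Qform br (A u) v = F u * f' v)"
    if u: "u \<in> ?m" "u \<noteq> 0" for u
  proof -
    have "u \<in> S" using S(2) u by blast
    then have "Fe differentiable (at u within S)"
      using Fed unfolding differentiable_on_def by blast
    then have "Fe differentiable (at u)"
      using at_within_open[OF \<open>u \<in> S\<close> S(1)] by simp
    then obtain f' where dF: "(Fe has_derivative f') (at u)" unfolding differentiable_def by blast
    have lf: "linear f'" using dF by (simp add: has_derivative_linear)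
    have ft: "\<forall>v\<in>?m. fund_tensor F u u v = F u * f' v"
      using fund_tensor_uu[OF ms hom Fe dF u(1)] by blast
    have ll: "linear (\<lambda>v. F u * f' v)"
      unfolding linear_iff using linear_add[OF lf] linear_scale[OF lf] by (simp add: algebra_simps)
    from metric_op_props[OF lb neg ft ll] show ?thesis using dF ft unfolding A_def by blast
  qed
  have red: "fund_tensor F u u (mpart br ?h (br u v)) = - Qform br (br u (A u)) v"
    if u: "u \<in> ?m" "u \<noteq> 0" and v: "v \<in> ?m" for u v
  proof -
    obtain f' where f': "A u \<in> ?m" "\<forall>v\<in>?m. fund_tensor F u u v = F u * f' v \<and> Qform br (A u) v = F u * f' v"
      using key[OF u] by blast
    let ?p = "mpart br ?h (br u v)"
    have mp: "?p \<in> ?m" "br u v - ?p \<in> ?h" using mpart_props[OF lb neg cas] by blast+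
    have "fund_tensor F u u ?p = Qform br (A u) ?p" using f'(2) mp(1) by simp
    also have "\<dots> = Qform br (A u) (br u v) - Qform br (A u) (br u v - ?p)"
      by (simp add: linear_diff[OF Q_lin2[OF lb]])
    also have "Qform br (A u) (br u v - ?p) = 0"
    proof -
      have "Qform br (br u v - ?p) (A u) = 0" using f'(1) mp(2) unfolding mcompl_def by blast
      then show ?thesis using Q_sym[OF lb, of "A u"] by simp
    qed
    also have "Qform br (A u) (br u v) = - Qform br (br u (A u)) v"
      using Q_inv[OF lb, of u "A u" v] by simp
    finally show ?thesis by simp
  qed
  show ?thesis
  proof
    assume NR: "naturally_reductive br ?h F"
    show "\<forall>u\<in>?m - {0}. br u (metric_op br ?m F u u) = 0"
    proof
      fix u assume uu: "u \<in> ?m - {0}"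
      then have u: "u \<in> ?m" "u \<noteq> 0" by auto
      define c where "c = br u (A u)"
      have cm: "Qform br c v = 0" if "v \<in> ?m" for v
      proof -
        have "fund_tensor F u u (mpart br ?h (br u v)) = 0"
          using NR uu that unfolding naturally_reductive_def by blast
        then show ?thesis using red[OF u that] unfolding c_def by simp
      qed
      obtain f' where dF: "(Fe has_derivative f') (at u)" and f': "A u \<in> ?m"
          "\<forall>v\<in>?m. fund_tensor F u u v = F u * f' v \<and> Qform br (A u) v = F u * f' v"
        using key[OF u] by blast
      have ch: "Qform br c x = 0" if x: "x \<in> ?h" for x
      proof -
        have inv: "br x u \<in> ?m \<and> f' (br x u) = 0"
          by (rule invariance[OF lb cas inv5 Fe dF u(1) x])
        have "Qform br c x = - Qform br (A u) (br u x)"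
          unfolding c_def by (rule Q_inv[OF lb])
        also have "br u x = - br x u" by (rule br_antisym[OF lb])
        also have "- Qform br (A u) (- br x u) = Qform br (A u) (br x u)"
          by (simp add: linear_neg[OF Q_lin2[OF lb]])
        also have "\<dots> = 0" using f'(2) inv by simp
        finally show ?thesis .
      qed
      let ?p = "mpart br ?h c"
      have mp: "?p \<in> ?m" "c - ?p \<in> ?h" using mpart_props[OF lb neg cas] by blast+
      have "Qform br c c = Qform br c ?p + Qform br c (c - ?p)"
        by (simp add: linear_diff[OF Q_lin2[OF lb]])
      also have "\<dots> = 0" using cm[OF mp(1)] ch[OF mp(2)] by simp
      finally have "Qform br c c = 0" .
      then have "c = 0" using Q_pos[OF neg, of c] by (cases "c = 0") auto
      then show "br u (metric_op br ?m F u u) = 0" unfolding c_def A_def .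
    qed
  next
    assume H: "\<forall>u\<in>?m - {0}. br u (metric_op br ?m F u u) = 0"
    show "naturally_reductive br ?h F"
      unfolding naturally_reductive_def
    proof (intro ballI)
      fix u v assume uu: "u \<in> ?m - {0}" and v: "v \<in> ?m"
      then have u: "u \<in> ?m" "u \<noteq> 0" by auto
      have "br u (A u) = 0" using H uu unfolding A_def by blast
      then show "fund_tensor F u u (mpart br ?h (br u v)) = 0"
        using red[OF u v] by (simp add: linear_0[OF Q_lin1[OF lb]])
    qed
  qed
qed

end
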